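(* Let $T$ be a tree and $(I,R)$ a crosscut pair of $T$. Then at least one of the following holds: (i) there exists a vertex $v\in I$ such that all but one vertex of $N_T(v)$ are leaves of $T$; (ii) there exists an edge $e\in R$ which is a pendant edge of $T$. In particular, if $|I|$ is maximum among all crosscut pairs $(I,R)$ of $T$, then (i) holds.
   Context: For a graph $F$, $|F|$ is its number of edges and $F-I$ the subgraph induced on $V(F)\setminus I$. The crosscut number is $\sigma(F)=\min\{|I|+|F-I| : I\text{ independent in }F\}$. A crosscut pair of a tree $T$ is a pair $(I,R)$ with $I\subseteq V(T)$ independent in $T$, $R=T-I$ (the edge set of the subgraph induced on $V(T)\setminus I$), and $|I|+|R|=\sigma(T)$. A leaf is a vertex of degree $1$; an edge $uv$ is pendant if $\min\{d_T(u),d_T(v)\}=1$. *)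

theory Defs
  imports Main
begin

definition simple_graph :: "'a set \<Rightarrow> 'a set set \<Rightarrow> bool" where
  "simple_graph V E \<longleftrightarrow> finite V \<and> (\<forall>e\<in>E. \<exists>u v. e = {u, v} \<and> u \<noteq> v \<and> u \<in> V \<and> v \<in> V)"

definition adj :: "'a set set \<Rightarrow> 'a \<Rightarrow> 'a \<Rightarrow> bool" where
  "adj E u v \<longleftrightarrow> {u, v} \<in> E"

definition neighbours :: "'a set set \<Rightarrow> 'a \<Rightarrow> 'a set" where
  "neighbours E v = {u. {u, v} \<in> E}"

definition degree :: "'a set set \<Rightarrow> 'a \<Rightarrow> nat" where
  "degree E v = card (neighbours E v)"

definition connected_graph :: "'a set \<Rightarrow> 'a set set \<Rightarrow> bool" where
  "connected_graph V E \<longleftrightarrow> V \<noteq> {} \<and> (\<forall>u\<in>V. \<forall>v\<in>V. (adj E)\<^sup>*\<^sup>* u v)"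

definition is_cycle :: "'a set set \<Rightarrow> 'a list \<Rightarrow> bool" where
  "is_cycle E cs \<longleftrightarrow> length cs \<ge> 3 \<and> distinct cs \<and>
     (\<forall>i. Suc i < length cs \<longrightarrow> adj E (cs ! i) (cs ! Suc i)) \<and> adj E (last cs) (hd cs)"

definition tree :: "'a set \<Rightarrow> 'a set set \<Rightarrow> bool" where
  "tree V E \<longleftrightarrow> simple_graph V E \<and> connected_graph V E \<and> (\<nexists>cs. is_cycle E cs)"

definition independent :: "'a set \<Rightarrow> 'a set set \<Rightarrow> 'a set \<Rightarrow> bool" where
  "independent V E I \<longleftrightarrow> I \<subseteq> V \<and> (\<forall>u\<in>I. \<forall>v\<in>I. {u, v} \<notin> E)"

text \<open>Edge set of F - I, the subgraph induced on V \ I.\<close>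
definition remove_vertices :: "'a set set \<Rightarrow> 'a set \<Rightarrow> 'a set set" where
  "remove_vertices E I = {e \<in> E. e \<inter> I = {}}"

definition crosscut_number :: "'a set \<Rightarrow> 'a set set \<Rightarrow> nat" where
  "crosscut_number V E = Min {card I + card (remove_vertices E I) | I. independent V E I}"

definition crosscut_pair :: "'a set \<Rightarrow> 'a set set \<Rightarrow> 'a set \<Rightarrow> 'a set set \<Rightarrow> bool" where
  "crosscut_pair V E I R \<longleftrightarrow> independent V E I \<and> R = remove_vertices E I \<and>
     card I + card R = crosscut_number V E"

definition leaf :: "'a set set \<Rightarrow> 'a \<Rightarrow> bool" where
  "leaf E v \<longleftrightarrow> degree E v = 1"

definition pendant_edge :: "'a set set \<Rightarrow> 'a set \<Rightarrow> bool" where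
  "pendant_edge E e \<longleftrightarrow> e \<in> E \<and> (\<exists>u v. e = {u, v} \<and> min (degree E u) (degree E v) = 1)"

text \<open>(i): some v in I such that all but (at most) one vertex of N(v) are leaves.\<close>
definition cond_i :: "'a set set \<Rightarrow> 'a set \<Rightarrow> bool" where
  "cond_i E I \<longleftrightarrow> (\<exists>v\<in>I. \<exists>u\<in>neighbours E v. \<forall>w\<in>neighbours E v. w \<noteq> u \<longrightarrow> leaf E w)"

definition cond_ii :: "'a set set \<Rightarrow> 'a set set \<Rightarrow> bool" where
  "cond_ii E R \<longleftrightarrow> (\<exists>e\<in>R. pendant_edge E e)"

end

theory Submission
  imports Defs
begin

definition gpath :: "'a set set \<Rightarrow> 'a list \<Rightarrow> bool" where
  "gpath E xs \<longleftrightarrow> distinct xs \<and> (\<forall>i. Suc i < length xs \<longrightarrow> {xs ! i, xs ! Suc i} \<in> E)"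

lemma sg_edge:
  assumes "simple_graph V E" "{x, y} \<in> E"
  shows "x \<noteq> y" "x \<in> V" "y \<in> V"
proof -
  obtain u v where "{x,y} = {u,v}" "u \<noteq> v" "u \<in> V" "v \<in> V"
    using assms unfolding simple_graph_def by blast
  then show "x \<noteq> y" "x \<in> V" "y \<in> V" by (auto simp: doubleton_eq_iff)
qed

lemma finite_nb:
  assumes "simple_graph V E"
  shows "finite (neighbours E p)"
proof -
  have "neighbours E p \<subseteq> V" using sg_edge[OF assms] unfolding neighbours_def by blast
  moreover have "finite V" using assms unfolding simple_graph_def by blast
  ultimately show ?thesis by (rule finite_subset)
qed

lemma cycle_from_path:
  assumes "gpath E xs" "2 \<le> j" "j < length xs" "{xs ! j, xs ! 0} \<in> E"
  shows "is_cycle E (take (Suc j) xs)"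
proof -
  have len: "length (take (Suc j) xs) = Suc j" using assms by simp
  have ne: "take (Suc j) xs \<noteq> []" using assms by auto
  have "last (take (Suc j) xs) = xs ! j"
    using assms ne by (simp add: last_conv_nth)
  moreover have "hd (take (Suc j) xs) = xs ! 0"
    using assms ne by (auto simp: hd_conv_nth)
  ultimately show ?thesis
    using assms len unfolding is_cycle_def gpath_def adj_def by auto
qed

lemma maxhd:
  assumes sg: "simple_graph V E" and nc: "\<nexists>cs. is_cycle E cs"
    and p: "gpath E xs" "set xs \<subseteq> V" "length xs \<ge> 2"
    and mx: "\<forall>ys. gpath E ys \<and> set ys \<subseteq> V \<longrightarrow> length ys \<le> length xs"
  shows "neighbours E (xs ! 0) = {xs ! 1}"
proof
  show "{xs ! 1} \<subseteq> neighbours E (xs ! 0)"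
    using p unfolding gpath_def neighbours_def by (auto simp: insert_commute)
next
  show "neighbours E (xs ! 0) \<subseteq> {xs ! 1}"
  proof
    fix y assume "y \<in> neighbours E (xs ! 0)"
    hence e: "{y, xs ! 0} \<in> E" unfolding neighbours_def by simp
    show "y \<in> {xs ! 1}"
    proof (cases "y \<in> set xs")
      case False
      have "gpath E (y # xs)"
        using p(1) False e unfolding gpath_def
        by (auto simp: nth_Cons split: nat.splits)
      moreover have "set (y # xs) \<subseteq> V" using p(2) sg_edge[OF sg e] by simp
      ultimately have "length (y # xs) \<le> length xs" using mx by blast
      thus ?thesis by simp
    next
      case True
      then obtain j where j: "j < length xs" "y = xs ! j" by (auto simp: in_set_conv_nth)
      show ?thesis
      proof (cases "j \<ge> 2")
        case True
        have "is_cycle E (take (Suc j) xs)"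
          using cycle_from_path[OF p(1) True j(1)] e j by simp
        thus ?thesis using nc by blast
      next
        case False
        moreover have "j \<noteq> 0" using sg_edge(1)[OF sg e] j by (cases j) auto
        ultimately have "j = 1" by simp
        thus ?thesis using j by simp
      qed
    qed
  qed
qed

lemma has_edge:
  assumes "tree V E" "card V \<ge> 2"
  shows "\<exists>a b. {a, b} \<in> E"
proof -
  have fin: "finite V" using assms unfolding tree_def simple_graph_def by blast
  obtain a b where ab: "a \<in> V" "b \<in> V" "a \<noteq> b"
  proof -
    have "\<not> (\<forall>a\<in>V. \<forall>b\<in>V. a = b)"
    proof
      assume "\<forall>a\<in>V. \<forall>b\<in>V. a = b"
      hence "card V \<le> Suc 0" using card_le_Suc0_iff_eq[OF fin] by blast
      thus False using assms by simp
    qed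
    thus ?thesis using that by blast
  qed
  have "(adj E)\<^sup>*\<^sup>* a b" using assms ab unfolding tree_def connected_graph_def by blast
  then show ?thesis using ab(3)
    by (cases rule: converse_rtranclpE) (auto simp: adj_def)
qed

lemma main_leaf:
  assumes "tree V E" "card V \<ge> 2"
  shows "\<exists>l p. {l, p} \<in> E \<and> neighbours E l = {p} \<and>
     (\<exists>u\<in>neighbours E p. \<forall>w\<in>neighbours E p. w \<noteq> u \<longrightarrow> leaf E w)"
proof -
  have sg: "simple_graph V E" and nc: "\<nexists>cs. is_cycle E cs"
    using assms unfolding tree_def by auto
  have fin: "finite V" using sg unfolding simple_graph_def by blast
  define P where "P = {xs. gpath E xs \<and> set xs \<subseteq> V}"
  have "P \<subseteq> {xs. set xs \<subseteq> V \<and> length xs \<le> card V}"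
  proof
    fix xs assume "xs \<in> P"
    hence "distinct xs" "set xs \<subseteq> V" unfolding P_def gpath_def by auto
    thus "xs \<in> {xs. set xs \<subseteq> V \<and> length xs \<le> card V}"
      using distinct_card card_mono[OF fin] by (metis mem_Collect_eq)
  qed
  hence finP: "finite P" using finite_lists_length_le[OF fin] finite_subset by blast
  obtain a b where ab: "{a, b} \<in> E" using has_edge[OF assms] by blast
  have "[a, b] \<in> P" using sg_edge[OF sg ab] ab unfolding P_def gpath_def
    by (auto simp: less_Suc_eq)
  hence neP: "P \<noteq> {}" by blast
  define m where "m = Max (length ` P)"
  have "m \<in> length ` P" unfolding m_def using finP neP by simp
  then obtain xs where xs: "xs \<in> P" "length xs = m" by blast
  have mx: "\<forall>ys. gpath E ys \<and> set ys \<subseteq> V \<longrightarrow> length ys \<le> length xs"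
  proof (intro allI impI)
    fix ys assume "gpath E ys \<and> set ys \<subseteq> V"
    hence "ys \<in> P" unfolding P_def by simp
    hence "length ys \<le> m" unfolding m_def using finP by simp
    thus "length ys \<le> length xs" using xs by simp
  qed
  have "length [a,b] \<le> length xs" using mx \<open>[a,b] \<in> P\<close> unfolding P_def by blast
  hence len: "length xs \<ge> 2" by simp
  have p: "gpath E xs" "set xs \<subseteq> V" using xs unfolding P_def by auto
  have N0: "neighbours E (xs ! 0) = {xs ! 1}" using maxhd[OF sg nc p len mx] .
  have e01: "{xs ! 0, xs ! 1} \<in> E" using p len unfolding gpath_def by auto
  have leaf0: "leaf E (xs ! 0)" using N0 unfolding leaf_def degree_def by simp
  have dp: "gpath E (drop 1 xs)" using p(1) unfolding gpath_def
    by (auto simp: distinct_drop)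
  have key: "\<And>w. w \<in> neighbours E (xs ! 1) \<Longrightarrow> w \<noteq> xs ! 0 \<Longrightarrow>
      (length xs \<ge> 3 \<longrightarrow> w \<noteq> xs ! 2) \<Longrightarrow> leaf E w"
  proof -
    fix w assume w: "w \<in> neighbours E (xs ! 1)" "w \<noteq> xs ! 0" "length xs \<ge> 3 \<longrightarrow> w \<noteq> xs ! 2"
    hence e: "{w, xs ! 1} \<in> E" unfolding neighbours_def by simp
    show "leaf E w"
    proof (cases "w \<in> set xs")
      case False
      have g: "gpath E (w # drop 1 xs)"
        unfolding gpath_def
      proof (intro conjI allI impI)
        show "distinct (w # drop 1 xs)" using dp False unfolding gpath_def
          by (auto dest: in_set_dropD)
        fix i assume i: "Suc i < length (w # drop 1 xs)"
        show "{(w # drop 1 xs) ! i, (w # drop 1 xs) ! Suc i} \<in> E"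
        proof (cases i)
          case 0
          then show ?thesis using e len by simp
        next
          case (Suc k)
          then show ?thesis using dp i unfolding gpath_def by simp
        qed
      qed
      have s: "set (w # drop 1 xs) \<subseteq> V" using p(2) sg_edge[OF sg e] set_drop_subset by fastforce
      have l2: "length (w # drop 1 xs) = length xs" using len by simp
      have "2 \<le> length (w # drop 1 xs)" using len by simp
      from maxhd[OF sg nc g s this] mx l2
      have "neighbours E w = {xs ! 1}" using len by (simp add: nth_Cons)
      thus ?thesis unfolding leaf_def degree_def by simp
    next
      case True
      then obtain j where j: "j < length xs" "w = xs ! j" by (auto simp: in_set_conv_nth)
      have "j \<noteq> 0" using j w by (cases j) auto
      moreover have "j \<noteq> 1" using sg_edge(1)[OF sg e] j by auto
      moreover have "j \<noteq> 2"
      proof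
        assume "j = 2" thus False using j w by auto
      qed
      ultimately have j3: "j \<ge> 3" by simp
      have "is_cycle E (take (Suc (j - 1)) (drop 1 xs))"
        using cycle_from_path[OF dp, of "j - 1"] j j3 e len by auto
      thus ?thesis using nc by blast
    qed
  qed
  show ?thesis
  proof (intro exI conjI)
    show "{xs ! 0, xs ! 1} \<in> E" by (rule e01)
    show "neighbours E (xs ! 0) = {xs ! 1}" by (rule N0)
    show "\<exists>u\<in>neighbours E (xs ! 1). \<forall>w\<in>neighbours E (xs ! 1). w \<noteq> u \<longrightarrow> leaf E w"
    proof (cases "length xs \<ge> 3")
      case True
      have "Suc 1 < length xs" using True by simp
      hence "{xs ! 1, xs ! Suc 1} \<in> E" using p(1) unfolding gpath_def by blast
      hence "{xs ! 1, xs ! 2} \<in> E" by (simp add: numeral_2_eq_2)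
      hence "xs ! 2 \<in> neighbours E (xs ! 1)" unfolding neighbours_def by (simp add: insert_commute)
      moreover have "\<forall>w\<in>neighbours E (xs ! 1). w \<noteq> xs ! 2 \<longrightarrow> leaf E w"
        using key leaf0 by blast
      ultimately show ?thesis by blast
    next
      case False
      have "xs ! 0 \<in> neighbours E (xs ! 1)" using e01 unfolding neighbours_def by simp
      moreover have "\<forall>w\<in>neighbours E (xs ! 1). w \<noteq> xs ! 0 \<longrightarrow> leaf E w"
        using key False by blast
      ultimately show ?thesis by blast
    qed
  qed
qed

lemma finite_E:
  assumes "simple_graph V E" shows "finite E"
proof -
  have "E \<subseteq> Pow V"
  proof
    fix e assume "e \<in> E"
    then obtain u v where "e = {u, v}" "u \<in> V" "v \<in> V" using assms unfolding simple_graph_def by blast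
    thus "e \<in> Pow V" by simp
  qed
  moreover have "finite V" using assms unfolding simple_graph_def by blast
  ultimately show ?thesis using finite_subset[of E "Pow V"] by simp
qed

theorem proposition2p6:
  fixes V :: "'a set" and E :: "'a set set" and I :: "'a set" and R :: "'a set set"
  assumes "tree V E" and "card V \<ge> 2"
    and "crosscut_pair V E I R"
  shows "(cond_i E I \<or> cond_ii E R) \<and>
         ((\<forall>I' R'. crosscut_pair V E I' R' \<longrightarrow> card I' \<le> card I) \<longrightarrow> cond_i E I)"
proof -
  have sg: "simple_graph V E" using assms(1) unfolding tree_def by blast
  have finV: "finite V" using sg unfolding simple_graph_def by blast
  have finE: "finite E" using finite_E[OF sg] .
  have ind: "independent V E I" and Rdef: "R = remove_vertices E I"
    and sig: "card I + card R = crosscut_number V E"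
    using assms(3) unfolding crosscut_pair_def by auto
  have finI: "finite I" using ind finV unfolding independent_def by (auto intro: finite_subset)
  have finR: "finite R" using Rdef finE unfolding remove_vertices_def by auto
  have part1: "cond_i E I \<or> cond_ii E R"
  proof -
    obtain l p u where lp: "{l, p} \<in> E" "neighbours E l = {p}"
      and u: "u \<in> neighbours E p" "\<forall>w\<in>neighbours E p. w \<noteq> u \<longrightarrow> leaf E w"
      using main_leaf[OF assms(1,2)] by blast
    show ?thesis
    proof (cases "{l, p} \<in> R")
      case True
      have dl: "degree E l = 1" using lp unfolding degree_def by simp
      have "l \<in> neighbours E p" using lp unfolding neighbours_def by simp
      hence "degree E p \<ge> 1" unfolding degree_def using finite_nb[OF sg]
        by (metis One_nat_def Suc_leI card_gt_0_iff empty_iff)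
      hence "min (degree E l) (degree E p) = 1" using dl by simp
      hence "pendant_edge E {l, p}" unfolding pendant_edge_def using lp by blast
      thus ?thesis using True unfolding cond_ii_def by blast
    next
      case False
      hence "l \<in> I \<or> p \<in> I" using lp Rdef unfolding remove_vertices_def by auto
      thus ?thesis
      proof
        assume "l \<in> I"
        moreover have "p \<in> neighbours E l" using lp by simp
        ultimately show ?thesis unfolding cond_i_def using lp by blast
      next
        assume "p \<in> I"
        thus ?thesis unfolding cond_i_def using u by blast
      qed
    qed
  qed
  have part2: "\<not> cond_ii E R" if mx: "\<forall>I' R'. crosscut_pair V E I' R' \<longrightarrow> card I' \<le> card I"
  proof
    assume "cond_ii E R"
    then obtain e where eR: "e \<in> R" and pe: "pendant_edge E e" unfolding cond_ii_def by blast
    then obtain x y where exy: "e = {x, y}" "min (degree E x) (degree E y) = 1"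
      unfolding pendant_edge_def by blast
    obtain a b where ab: "e = {a, b}" "degree E a = 1"
    proof (cases "degree E x = 1")
      case True thus ?thesis using that exy by blast
    next
      case False
      hence "degree E y = 1" using exy by (simp add: min_def split: if_splits)
      thus ?thesis using that exy by (metis insert_commute)
    qed
    have eE: "e \<in> E" and eI: "e \<inter> I = {}" using eR Rdef unfolding remove_vertices_def by auto
    have aI: "a \<notin> I" "b \<notin> I" using eI ab by auto
    obtain c where "neighbours E a = {c}" using ab(2) unfolding degree_def
      by (metis card_1_singletonE)
    moreover have "b \<in> neighbours E a" using eE ab unfolding neighbours_def by (simp add: insert_commute)
    ultimately have Na: "neighbours E a = {b}" by simp
    have aV: "a \<in> V" using sg_edge[OF sg] eE ab by blast
    have noloop: "{z, z} \<notin> E" for z using sg_edge(1)[OF sg, of z z] by blast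
    have ind': "independent V E (insert a I)"
      unfolding independent_def
    proof (intro conjI ballI)
      show "insert a I \<subseteq> V" using aV ind unfolding independent_def by blast
      fix s t assume st: "s \<in> insert a I" "t \<in> insert a I"
      show "{s, t} \<notin> E"
      proof
        assume st_e: "{s, t} \<in> E"
        show False
        proof (cases "s = a")
          case True
          show False
          proof (cases "t = a")
            case True thus False using `s = a` st_e noloop by simp
          next
            case False
            hence "t \<in> I" using st by simp
            moreover have "t \<in> neighbours E a" using st_e `s = a` unfolding neighbours_def
              by (simp add: insert_commute)
            ultimately show False using Na aI by simp
          qed
        next
          case False
          hence sI: "s \<in> I" using st by simp
          show False
          proof (cases "t = a")
            case True
            have "s \<in> neighbours E a" using st_e True unfolding neighbours_def by simp
            thus False using Na aI sI by simp
          next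
            case False
            hence "t \<in> I" using st by simp
            thus False using sI st_e ind unfolding independent_def by blast
          qed
        qed
      qed
    qed
    have R': "R - {e} = remove_vertices E (insert a I)"
    proof
      show "R - {e} \<subseteq> remove_vertices E (insert a I)"
      proof
        fix f assume f: "f \<in> R - {e}"
        hence fE: "f \<in> E" and fI: "f \<inter> I = {}" and fe: "f \<noteq> e"
          using Rdef unfolding remove_vertices_def by auto
        have "a \<notin> f"
        proof
          assume "a \<in> f"
          obtain s t where "f = {s, t}" using fE sg unfolding simple_graph_def by blast
          then obtain z where fz: "f = {a, z}" using `a \<in> f` by auto
          hence "z \<in> neighbours E a" using fE unfolding neighbours_def by (simp add: insert_commute)
          hence "z = b" using Na by simp
          thus False using fz fe ab by simp
        qed
        thus "f \<in> remove_vertices E (insert a I)" using fE fI unfolding remove_vertices_def by auto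
      qed
    next
      show "remove_vertices E (insert a I) \<subseteq> R - {e}"
        using Rdef ab unfolding remove_vertices_def by auto
    qed
    have "card (insert a I) = card I + 1" using finI aI by simp
    moreover have "card (R - {e}) = card R - 1" using finR eR by simp
    moreover have "card R \<ge> 1" using finR eR by (metis One_nat_def Suc_leI card_gt_0_iff empty_iff)
    ultimately have "card (insert a I) + card (R - {e}) = crosscut_number V E" using sig by simp
    hence "crosscut_pair V E (insert a I) (R - {e})"
      unfolding crosscut_pair_def using ind' R' by simp
    hence "card (insert a I) \<le> card I" using mx by blast
    thus False using finI aI by simp
  qed
  show ?thesis using part1 part2 by blast
qed

end
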